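(* Let $1<p<\infty$ and define $f:\mathbb{R}^2\to\mathbb{R}$ by $$f(x,y)=|x+y|^p-|x|^p-yp|x|^{p-1}\operatorname{sign}(x).$$ Then: (a) there is a constant $\Lambda>2$ such that $f(x,2y)\ge\Lambda f(x,y)$ for all $x,y\in\mathbb{R}$; (b) there is a constant $T>0$ such that $f(x,2y)\le Tf(x,y)$ for all $x,y\in\mathbb{R}$; (c) there is a constant $K>0$ such that $f(x,y)\le Kf(x,-y)$ for all $x,y\in\mathbb{R}$. *)

theory Defs
  imports Complex_Main
begin

definition fp :: "real \<Rightarrow> real \<Rightarrow> real \<Rightarrow> real" where
  "fp p x y = \<bar>x + y\<bar> powr p - \<bar>x\<bar> powr p - y * p * \<bar>x\<bar> powr (p - 1) * sgn x"

end

theory Submission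
  imports Defs "HOL-Real_Asymp.Real_Asymp"
begin

lemma gen_lower:
  fixes F :: "real \<Rightarrow> real"
  assumes cont: "continuous_on (-{0}) F"
    and gt: "\<And>t. t \<noteq> 0 \<Longrightarrow> F t > c"
    and l0: "(F \<longlongrightarrow> a) (at 0)" and a: "a > c"
    and l1: "(F \<longlongrightarrow> b) at_top" and b: "b > c"
    and l2: "(F \<longlongrightarrow> d) at_bot" and d: "d > c"
  shows "\<exists>c'>c. \<forall>t. t \<noteq> 0 \<longrightarrow> F t \<ge> c'"
proof -
  have "eventually (\<lambda>t. F t > (a + c) / 2) (at 0)"
    using l0 a by (intro order_tendstoD) auto
  then obtain \<delta> where \<delta>: "\<delta> > 0" "\<And>t. t \<noteq> 0 \<Longrightarrow> dist t 0 < \<delta> \<Longrightarrow> F t > (a + c) / 2"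
    unfolding eventually_at by blast
  have "eventually (\<lambda>t. F t > (b + c) / 2) at_top"
    using l1 b by (intro order_tendstoD) auto
  then obtain M1 where M1: "\<And>t. t \<ge> M1 \<Longrightarrow> F t > (b + c) / 2"
    unfolding eventually_at_top_linorder by blast
  have "eventually (\<lambda>t. F t > (d + c) / 2) at_bot"
    using l2 d by (intro order_tendstoD) auto
  then obtain M2 where M2: "\<And>t. t \<le> M2 \<Longrightarrow> F t > (d + c) / 2"
    unfolding eventually_at_bot_linorder by blast
  have c1: "continuous_on {min M2 (-\<delta>)..-\<delta>} F" "continuous_on {\<delta>..max \<delta> M1} F"
    using \<delta>(1) by (auto intro: continuous_on_subset[OF cont])
  obtain x1 where x1: "x1 \<in> {min M2 (-\<delta>)..-\<delta>}" "\<And>y. y \<in> {min M2 (-\<delta>)..-\<delta>} \<Longrightarrow> F x1 \<le> F y"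
    using continuous_attains_inf[OF compact_Icc _ c1(1)] by fastforce
  obtain x2 where x2: "x2 \<in> {\<delta>..max \<delta> M1}" "\<And>y. y \<in> {\<delta>..max \<delta> M1} \<Longrightarrow> F x2 \<le> F y"
    using continuous_attains_inf[OF compact_Icc _ c1(2)] by fastforce
  define x where "x = (if F x1 \<le> F x2 then x1 else x2)"
  define S where "S = {min M2 (-\<delta>)..-\<delta>} \<union> {\<delta>..max \<delta> M1}"
  have S0: "0 \<notin> S" using \<delta> by (auto simp: S_def)
  have x: "x \<in> S" "\<And>y. y \<in> S \<Longrightarrow> F x \<le> F y"
    using x1 x2 unfolding S_def x_def by (auto split: if_splits) (metis order_trans nle_le)+
  have Fx: "F x > c" using gt x(1) S0 by (metis)
  define c' where "c' = min (min ((a + c) / 2) ((b + c) / 2)) (min ((d + c) / 2) (F x))"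
  have "c' > c" using a b d Fx by (simp add: c'_def)
  moreover have "F t \<ge> c'" if "t \<noteq> 0" for t
  proof -
    have "\<bar>t\<bar> < \<delta> \<or> t \<ge> M1 \<or> t \<le> M2 \<or> t \<in> S"
      unfolding S_def atLeastAtMost_iff Un_iff by arith
    then consider "\<bar>t\<bar> < \<delta>" | "t \<ge> M1" | "t \<le> M2" | "t \<in> S"
      by blast
    then show ?thesis
    proof cases
      case 1 then show ?thesis using \<delta>(2)[of t] that by (auto simp: c'_def min_le_iff_disj)
    next
      case 2 then show ?thesis using M1[of t] by (auto simp: c'_def min_le_iff_disj)
    next
      case 3 then show ?thesis using M2[of t] by (auto simp: c'_def min_le_iff_disj)
    next
      case 4 then show ?thesis using x(2)[of t] by (auto simp: c'_def min_le_iff_disj)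
    qed
  qed
  ultimately show ?thesis by blast
qed

lemma gen_upper:
  fixes F :: "real \<Rightarrow> real"
  assumes cont: "continuous_on (-{0}) F"
    and l0: "(F \<longlongrightarrow> a) (at 0)"
    and l1: "(F \<longlongrightarrow> b) at_top"
    and l2: "(F \<longlongrightarrow> d) at_bot"
  shows "\<exists>M. \<forall>t. t \<noteq> 0 \<longrightarrow> F t \<le> M"
proof -
  have "eventually (\<lambda>t. F t < a + 1) (at 0)"
    using l0 by (intro order_tendstoD) auto
  then obtain \<delta> where \<delta>: "\<delta> > 0" "\<And>t. t \<noteq> 0 \<Longrightarrow> dist t 0 < \<delta> \<Longrightarrow> F t < a + 1"
    unfolding eventually_at by blast
  have "eventually (\<lambda>t. F t < b + 1) at_top"
    using l1 by (intro order_tendstoD) auto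
  then obtain M1 where M1: "\<And>t. t \<ge> M1 \<Longrightarrow> F t < b + 1"
    unfolding eventually_at_top_linorder by blast
  have "eventually (\<lambda>t. F t < d + 1) at_bot"
    using l2 by (intro order_tendstoD) auto
  then obtain M2 where M2: "\<And>t. t \<le> M2 \<Longrightarrow> F t < d + 1"
    unfolding eventually_at_bot_linorder by blast
  have c1: "continuous_on {min M2 (-\<delta>)..-\<delta>} F" "continuous_on {\<delta>..max \<delta> M1} F"
    using \<delta>(1) by (auto intro: continuous_on_subset[OF cont])
  obtain x1 where x1: "x1 \<in> {min M2 (-\<delta>)..-\<delta>}" "\<And>y. y \<in> {min M2 (-\<delta>)..-\<delta>} \<Longrightarrow> F y \<le> F x1"
    using continuous_attains_sup[OF compact_Icc _ c1(1)] by fastforce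
  obtain x2 where x2: "x2 \<in> {\<delta>..max \<delta> M1}" "\<And>y. y \<in> {\<delta>..max \<delta> M1} \<Longrightarrow> F y \<le> F x2"
    using continuous_attains_sup[OF compact_Icc _ c1(2)] by fastforce
  define x where "x = (if F x1 \<ge> F x2 then x1 else x2)"
  define S where "S = {min M2 (-\<delta>)..-\<delta>} \<union> {\<delta>..max \<delta> M1}"
  have x: "x \<in> S" "\<And>y. y \<in> S \<Longrightarrow> F y \<le> F x"
    using x1 x2 unfolding S_def x_def by (auto split: if_splits) (metis order_trans nle_le)+
  define M where "M = max (max (a + 1) (b + 1)) (max (d + 1) (F x))"
  have "F t \<le> M" if "t \<noteq> 0" for t
  proof -
    have "\<bar>t\<bar> < \<delta> \<or> t \<ge> M1 \<or> t \<le> M2 \<or> t \<in> S"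
      unfolding S_def atLeastAtMost_iff Un_iff by arith
    then consider "\<bar>t\<bar> < \<delta>" | "t \<ge> M1" | "t \<le> M2" | "t \<in> S"
      by blast
    then show ?thesis
    proof cases
      case 1 then show ?thesis using \<delta>(2)[of t] that by (auto simp: M_def le_max_iff_disj)
    next
      case 2 then show ?thesis using M1[of t] by (auto simp: M_def le_max_iff_disj)
    next
      case 3 then show ?thesis using M2[of t] by (auto simp: M_def le_max_iff_disj)
    next
      case 4 then show ?thesis using x(2)[of t] by (auto simp: M_def le_max_iff_disj)
    qed
  qed
  then show ?thesis by blast
qed

lemma fp_hom:
  assumes "x \<noteq> 0"
  shows "fp p x y = \<bar>x\<bar> powr p * fp p 1 (y / x)"
proof -
  have ax: "\<bar>x\<bar> > 0" using assms by simp
  have "\<bar>x + y\<bar> = \<bar>x\<bar> * \<bar>1 + y / x\<bar>"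
    using assms by (simp add: abs_mult[symmetric] field_simps)
  hence e1: "\<bar>x + y\<bar> powr p = \<bar>x\<bar> powr p * \<bar>1 + y / x\<bar> powr p"
    by (simp add: powr_mult)
  have e2: "\<bar>x\<bar> powr (p - 1) = \<bar>x\<bar> powr p / \<bar>x\<bar>"
    using ax by (simp add: powr_diff)
  have e3: "sgn x / \<bar>x\<bar> = 1 / x"
    using assms by (cases "x > 0") auto
  have "y * p * \<bar>x\<bar> powr (p - 1) * sgn x = \<bar>x\<bar> powr p * (p * (y / x))"
    unfolding e2 using assms by (cases "x > 0") (auto simp: field_simps)
  thus ?thesis unfolding fp_def e1 by (simp add: algebra_simps)
qed

lemma strict_bern:
  fixes u p :: real
  assumes p: "1 < p" and u: "u \<noteq> 1"
  shows "\<bar>u\<bar> powr p > 1 + p * (u - 1)"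
proof (cases "u \<le> 0")
  case True
  have "p * (u - 1) \<le> p * (-1)" using True p by (intro mult_left_mono) auto
  then have "1 + p * (u - 1) < 0" using p by linarith
  moreover have "\<bar>u\<bar> powr p \<ge> 0" by simp
  ultimately show ?thesis by linarith
next
  case False
  hence u0: "u > 0" by simp
  have D: "\<And>z. z > 0 \<Longrightarrow> ((\<lambda>z. z powr p) has_real_derivative p * z powr (p - 1)) (at z)"
    by (rule has_real_derivative_powr)
  show ?thesis
  proof (cases "u > 1")
    case True
    have "\<exists>z. 1 < z \<and> z < u \<and> u powr p - 1 powr p = (u - 1) * (p * z powr (p - 1))"
      by (rule MVT2[OF True]) (rule D, simp)
    then obtain z where z: "1 < z" "z < u" "u powr p - 1 powr p = (u - 1) * (p * z powr (p - 1))"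
      by blast
    have "1 powr (p - 1) < z powr (p - 1)" using z p by (intro powr_less_mono2) auto
    hence "z powr (p - 1) > 1" by simp
    hence "(u - 1) * (p * z powr (p - 1)) > (u - 1) * p" using True p by simp
    hence i: "(u - 1) * (p * z powr (p - 1)) > p * (u - 1)" by (simp add: mult.commute)
    have e: "\<bar>u\<bar> powr p = 1 + (u - 1) * (p * z powr (p - 1))" using z(3) u0 by simp
    show ?thesis unfolding e using i by linarith
  next
    case False
    hence ul: "u < 1" using u by simp
    have "\<exists>z. u < z \<and> z < 1 \<and> 1 powr p - u powr p = (1 - u) * (p * z powr (p - 1))"
      by (rule MVT2[OF ul]) (rule D, use u0 in simp)
    then obtain z where z: "u < z" "z < 1" "1 powr p - u powr p = (1 - u) * (p * z powr (p - 1))"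
      by blast
    have "z powr (p - 1) < 1 powr (p - 1)" using z p u0 by (intro powr_less_mono2) auto
    hence "z powr (p - 1) < 1" by simp
    hence "(1 - u) * (p * z powr (p - 1)) < (1 - u) * p" using ul p by simp
    hence i: "(1 - u) * (p * z powr (p - 1)) < - (p * (u - 1))" by (simp add: algebra_simps)
    have e: "\<bar>u\<bar> powr p = 1 - (1 - u) * (p * z powr (p - 1))" using z(3) u0 by simp
    show ?thesis unfolding e using i by linarith
  qed
qed

lemma fp_pos:
  assumes p: "1 < p" and y: "y \<noteq> 0"
  shows "fp p x y > 0"
proof (cases "x = 0")
  case True
  then show ?thesis using y p by (simp add: fp_def)
next
  case False
  have "fp p 1 (y / x) > 0"
    using strict_bern[OF p, of "1 + y / x"] y False by (simp add: fp_def algebra_simps)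
  then show ?thesis using fp_hom[OF False] False by simp
qed

lemma fp_nonneg:
  assumes p: "1 < p"
  shows "fp p x y \<ge> 0"
  using fp_pos[OF p, of y x] by (cases "y = 0") (auto simp: fp_def)

lemma fp_second: "fp p x (2 * y) - 2 * fp p x y = fp p (x + y) y + fp p (x + y) (- y)"
  by (simp add: fp_def algebra_simps)

lemma fp_one: "fp p 1 t = \<bar>1 + t\<bar> powr p - 1 - p * t"
  by (simp add: fp_def)

lemma fp_zero: "fp p 0 y = \<bar>y\<bar> powr p"
  by (simp add: fp_def)

theorem lemma6p8:
  fixes p :: real
  assumes p: "1 < p"
  shows "(\<exists>\<Lambda>>2. \<forall>x y. fp p x (2 * y) \<ge> \<Lambda> * fp p x y)
       \<and> (\<exists>T>0. \<forall>x y. fp p x (2 * y) \<le> T * fp p x y)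
       \<and> (\<exists>K>0. \<forall>x y. fp p x y \<le> K * fp p x (- y))"
proof -
  define g where "g = (\<lambda>t. fp p 1 t)"
  have gpos: "\<And>t. t \<noteq> 0 \<Longrightarrow> g t > 0" unfolding g_def using fp_pos[OF p] by blast
  have g0: "g 0 = 0" by (simp add: g_def fp_def)
  have gcont: "continuous_on A g" for A
    unfolding g_def fp_one using p
    by (intro continuous_intros continuous_on_powr') auto
  have h2: "g (2 * t) > 2 * g t" if "t \<noteq> 0" for t
    using fp_second[of p 1 t] fp_pos[OF p, of t "1 + t"] fp_pos[OF p, of "- t" "1 + t"] that
    unfolding g_def by simp
  have hom: "fp p x y = \<bar>x\<bar> powr p * g (y / x)" if "x \<noteq> 0" for x y
    using fp_hom[OF that] by (simp add: g_def)
  have p2: "2 powr p > 2"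
    using powr_less_mono[of 1 p 2] p by simp
  have ne: "\<forall>t\<in>-{0}. g t \<noteq> 0" using gpos by fastforce
  define F where "F = (\<lambda>t. g (2 * t) / g t)"
  have Fcont: "continuous_on (-{0}) F"
    unfolding F_def using ne
    by (intro continuous_on_divide continuous_on_compose2[OF gcont[of UNIV]] continuous_intros) auto
  have F0: "(F \<longlongrightarrow> 4) (at 0)"
  proof (rule filterlim_split_at)
    show "(F \<longlongrightarrow> 4) (at_left 0)" unfolding F_def g_def fp_one using p by real_asymp
    show "(F \<longlongrightarrow> 4) (at_right 0)" unfolding F_def g_def fp_one using p by real_asymp
  qed
  have F1: "(F \<longlongrightarrow> 2 powr p) at_top" unfolding F_def g_def fp_one using p by real_asymp
  have F2: "(F \<longlongrightarrow> 2 powr p) at_bot" unfolding F_def g_def fp_one using p by real_asymp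
  have Fgt: "\<And>t. t \<noteq> 0 \<Longrightarrow> F t > 2"
    unfolding F_def using h2 gpos by (simp add: pos_less_divide_eq)
  obtain c' where c': "c' > 2" "\<And>t. t \<noteq> 0 \<Longrightarrow> F t \<ge> c'"
    using gen_lower[OF Fcont Fgt F0 _ F1 p2 F2 p2] by auto
  obtain M where M: "\<And>t. t \<noteq> 0 \<Longrightarrow> F t \<le> M"
    using gen_upper[OF Fcont F0 F1 F2] by auto
  have zero2: "fp p 0 (2 * y) = 2 powr p * fp p 0 y" for y
    by (simp add: fp_zero abs_mult powr_mult)
  have A: "\<exists>\<Lambda>>2. \<forall>x y. fp p x (2 * y) \<ge> \<Lambda> * fp p x y"
  proof (intro exI[of _ "min c' (2 powr p)"] conjI allI)
    show "2 < min c' (2 powr p)" using c' p2 by simp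
    fix x y
    show "min c' (2 powr p) * fp p x y \<le> fp p x (2 * y)"
    proof (cases "x = 0")
      case True
      have "min c' (2 powr p) * fp p 0 y \<le> 2 powr p * fp p 0 y"
        by (intro mult_right_mono fp_nonneg[OF p]) simp
      then show ?thesis using True zero2 by simp
    next
      case False
      define t where "t = y / x"
      have e: "2 * y / x = 2 * t" by (simp add: t_def)
      have "min c' (2 powr p) * g t \<le> g (2 * t)"
      proof (cases "t = 0")
        case True then show ?thesis by (simp add: g0)
      next
        case False
        have "min c' (2 powr p) * g t \<le> c' * g t"
          using gpos[OF False] by (intro mult_right_mono) auto
        also have "\<dots> \<le> g (2 * t)"
          using c'(2)[OF False] gpos[OF False] by (simp add: F_def pos_le_divide_eq)
        finally show ?thesis .
      qed
      then have "\<bar>x\<bar> powr p * (min c' (2 powr p) * g t) \<le> \<bar>x\<bar> powr p * g (2 * t)"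
        by (intro mult_left_mono) auto
      then show ?thesis unfolding hom[OF False] e t_def[symmetric] by (simp add: algebra_simps)
    qed
  qed
  have B: "\<exists>T>0. \<forall>x y. fp p x (2 * y) \<le> T * fp p x y"
  proof (intro exI[of _ "max M (2 powr p)"] conjI allI)
    show "0 < max M (2 powr p)" using p2 by simp
    fix x y
    show "fp p x (2 * y) \<le> max M (2 powr p) * fp p x y"
    proof (cases "x = 0")
      case True
      have "2 powr p * fp p 0 y \<le> max M (2 powr p) * fp p 0 y"
        by (intro mult_right_mono fp_nonneg[OF p]) simp
      then show ?thesis using True zero2 by simp
    next
      case False
      define t where "t = y / x"
      have e: "2 * y / x = 2 * t" by (simp add: t_def)
      have "g (2 * t) \<le> max M (2 powr p) * g t"
      proof (cases "t = 0")
        case True then show ?thesis by (simp add: g0)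
      next
        case False
        have "g (2 * t) \<le> M * g t"
          using M[OF False] gpos[OF False] by (simp add: F_def pos_divide_le_eq)
        also have "\<dots> \<le> max M (2 powr p) * g t"
          using gpos[OF False] by (intro mult_right_mono) auto
        finally show ?thesis .
      qed
      then have "\<bar>x\<bar> powr p * g (2 * t) \<le> \<bar>x\<bar> powr p * (max M (2 powr p) * g t)"
        by (intro mult_left_mono) auto
      then show ?thesis unfolding hom[OF False] e t_def[symmetric] by (simp add: algebra_simps)
    qed
  qed
  define G where "G = (\<lambda>t. g t / g (- t))"
  have ne': "\<forall>t\<in>-{0}. g (- t) \<noteq> 0"
  proof
    fix t :: real assume "t \<in> -{0}"
    hence "- t \<noteq> 0" by simp
    from gpos[OF this] show "g (- t) \<noteq> 0" by simp
  qed
  have Gcont: "continuous_on (-{0}) G"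
    unfolding G_def using ne'
    by (intro continuous_on_divide continuous_on_compose2[OF gcont[of UNIV]] continuous_intros gcont) auto
  have G0: "(G \<longlongrightarrow> 1) (at 0)"
  proof (rule filterlim_split_at)
    show "(G \<longlongrightarrow> 1) (at_left 0)" unfolding G_def g_def fp_one using p by real_asymp
    show "(G \<longlongrightarrow> 1) (at_right 0)" unfolding G_def g_def fp_one using p by real_asymp
  qed
  have G1: "(G \<longlongrightarrow> 1) at_top" unfolding G_def g_def fp_one using p by real_asymp
  have G2: "(G \<longlongrightarrow> 1) at_bot" unfolding G_def g_def fp_one using p by real_asymp
  obtain N where N: "\<And>t. t \<noteq> 0 \<Longrightarrow> G t \<le> N"
    using gen_upper[OF Gcont G0 G1 G2] by auto
  have C: "\<exists>K>0. \<forall>x y. fp p x y \<le> K * fp p x (- y)"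
  proof (intro exI[of _ "max N 1"] conjI allI)
    show "0 < max N 1" by simp
    fix x y
    show "fp p x y \<le> max N 1 * fp p x (- y)"
    proof (cases "x = 0")
      case True
      have "1 * fp p 0 y \<le> max N 1 * fp p 0 y"
        by (intro mult_right_mono fp_nonneg[OF p]) simp
      moreover have "fp p 0 (- y) = fp p 0 y" by (simp add: fp_zero)
      ultimately show ?thesis using True by simp
    next
      case False
      define t where "t = y / x"
      have e: "- y / x = - t" by (simp add: t_def)
      have "g t \<le> max N 1 * g (- t)"
      proof (cases "t = 0")
        case True then show ?thesis by (simp add: g0)
      next
        case False
        have gp: "g (- t) > 0" using gpos False by simp
        have "g t \<le> N * g (- t)"
          using N[OF False] gp by (simp add: G_def pos_divide_le_eq)
        also have "\<dots> \<le> max N 1 * g (- t)"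
          using gp by (intro mult_right_mono) auto
        finally show ?thesis .
      qed
      then have "\<bar>x\<bar> powr p * g t \<le> \<bar>x\<bar> powr p * (max N 1 * g (- t))"
        by (intro mult_left_mono) auto
      then show ?thesis unfolding hom[OF False] e t_def[symmetric] by (simp add: algebra_simps)
    qed
  qed
  show ?thesis using A B C by blast
qed

end
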